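(* Let $q$ be a prime power and let $f(X)\in\mathbb{F}_q[X]$ be separable and exceptional over $\mathbb{F}_q$. Then: $\deg(f)\ne 2$; if $\deg(f)=3$ then $f(X)$ has at most one critical value; and if $\deg(f)=4$ then $q$ is even and $f(X)$ has no critical values.
   Context: $f(X)$ is separable if $f'(X)\neq 0$. $f(X)$ is exceptional over $\mathbb{F}_q$ if the only polynomials in $\mathbb{F}_q[X,Y]$ which divide $f(X)-f(Y)$ and are irreducible in $\overline{\mathbb{F}}_q[X,Y]$ are $c\cdot(X-Y)$ with $c\in\mathbb{F}_q^*$. A critical value of $f$ is $f(c)$ for some $c\in\overline{\mathbb{F}}_q$ with $f'(c)=0$. *)

theory Defs
  imports "HOL-Computational_Algebra.Polynomial" "HOL-Algebra.Algebraic_Closure_Type"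
begin

text \<open>Bivariate polynomials in F[X,Y] are represented as elements of ('a poly) poly:
  the inner variable is X, the outer variable is Y.\<close>

definition fX_minus_fY :: "'a::comm_ring_1 poly \<Rightarrow> 'a poly poly" where
  "fX_minus_fY f = [:f:] - map_poly (\<lambda>c. [:c:]) f"

definition X_minus_Y :: "'a::comm_ring_1 poly poly" where
  "X_minus_Y = [:[:0, 1:], [:-1:]:]"

definition separable_poly :: "'a::field poly \<Rightarrow> bool" where
  "separable_poly f \<longleftrightarrow> pderiv f \<noteq> 0"

definition exceptional :: "'a::field poly \<Rightarrow> bool" where
  "exceptional f \<longleftrightarrow>
     (\<forall>h :: 'a poly poly. h dvd fX_minus_fY f \<and> irreducible (map_poly (map_poly to_ac) h)
        \<longrightarrow> (\<exists>c. c \<noteq> 0 \<and> h = smult [:c:] X_minus_Y))"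

definition critical_values :: "'a::field poly \<Rightarrow> 'a alg_closure set" where
  "critical_values f =
     {poly (map_poly to_ac f) c | c. poly (pderiv (map_poly to_ac f)) c = 0}"

end

theory Submission imports Defs begin

lemma map_poly_hom_add:
  assumes "\<And>x y. h (x + y) = h x + h y" "h 0 = 0"
  shows "map_poly h (p + q) = map_poly h p + map_poly h q"
  by (rule poly_eqI) (simp add: coeff_map_poly assms)

lemma map_poly_hom_smult:
  assumes "\<And>x y. h (x * y) = h x * h y" "h 0 = 0"
  shows "map_poly h (smult a q) = smult (h a) (map_poly h q)"
  by (rule poly_eqI) (simp add: coeff_map_poly assms)

lemma map_poly_hom_mult:
  fixes h :: "'c::comm_semiring_1 \<Rightarrow> 'd::comm_semiring_1"
  assumes "\<And>x y. h (x + y) = h x + h y" "\<And>x y. h (x * y) = h x * h y" "h 0 = 0"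
  shows "map_poly h (p * q) = map_poly h p * map_poly h q"
proof (induction p)
  case 0 then show ?case by simp
next
  case (pCons a p)
  have "map_poly h (pCons a p * q) = map_poly h (smult a q + pCons 0 (p * q))" by simp
  also have "\<dots> = smult (h a) (map_poly h q) + pCons 0 (map_poly h p * map_poly h q)"
    by (simp add: map_poly_hom_add map_poly_hom_smult map_poly_pCons assms pCons.IH)
  also have "\<dots> = map_poly h (pCons a p) * map_poly h q" by (simp add: map_poly_pCons assms)
  finally show ?case .
qed

lemma M_add [simp]: "map_poly to_ac (p + q) = map_poly to_ac p + map_poly to_ac q"
  by (rule map_poly_hom_add) simp_all
lemma M_minus [simp]: "map_poly to_ac (- p) = - map_poly to_ac p"
  by (rule poly_eqI) (simp add: coeff_map_poly)
lemma M_diff [simp]: "map_poly to_ac (p - q) = map_poly to_ac p - map_poly to_ac q"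
  by (rule poly_eqI) (simp add: coeff_map_poly)
lemma M_mult [simp]: "map_poly to_ac (p * q) = map_poly to_ac p * map_poly to_ac q"
  by (rule map_poly_hom_mult) simp_all
lemma M_pCons [simp]: "map_poly to_ac (pCons c p) = pCons (to_ac c) (map_poly to_ac p)"
  by (simp add: map_poly_pCons)
lemma MM_mult: "map_poly (map_poly to_ac) (P * Q) = map_poly (map_poly to_ac) P * map_poly (map_poly to_ac) Q"
  by (rule map_poly_hom_mult) simp_all
lemma MM_pCons [simp]: "map_poly (map_poly to_ac) (pCons c P) = pCons (map_poly to_ac c) (map_poly (map_poly to_ac) P)"
  by (simp add: map_poly_pCons)

lemma coeff_fXfY: "coeff (fX_minus_fY f) k = (if k = 0 then f else 0) - [:coeff f k:]"
  by (auto simp add: fX_minus_fY_def coeff_map_poly coeff_pCons split: nat.splits)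

lemma map_fXfY: "map_poly (map_poly to_ac) (fX_minus_fY f) = fX_minus_fY (map_poly to_ac f)"
  by (rule poly_eqI) (simp add: coeff_map_poly coeff_fXfY)

lemma eval_fXfY: "poly (fX_minus_fY F) \<phi> = F - pcompose F \<phi>"
  by (simp add: fX_minus_fY_def pcompose_altdef)
lemma eval_XmY: "poly X_minus_Y \<phi> = [:0,1:] - \<phi>"
  by (simp add: X_minus_Y_def)
lemma map_XmY: "map_poly (map_poly to_ac) X_minus_Y = X_minus_Y"
  by (simp add: X_minus_Y_def)

lemma irreducible_monic_lin:
  fixes c :: "'b::idom" shows "irreducible [:c, 1:]"
proof (rule irreducibleI)
  show "[:c,1:] \<noteq> 0" by simp
  show "\<not> [:c,1:] dvd 1" by (auto simp: is_unit_poly_iff)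
  fix a b assume ab: "[:c, 1:] = a * b"
  then have a0: "a \<noteq> 0" "b \<noteq> 0" by auto
  have "degree (a*b) = 1" using ab[symmetric] by simp
  then have dg: "degree a + degree b = 1" using a0 by (simp add: degree_mult_eq)
  have "lead_coeff (a*b) = 1" unfolding ab[symmetric] by simp
  then have lc: "lead_coeff a * lead_coeff b = 1" by (simp add: lead_coeff_mult)
  show "a dvd 1 \<or> b dvd 1"
  proof (cases "degree a = 0")
    case True
    then have "a = [:lead_coeff a:]" by (metis degree_eq_zeroE lead_coeff_pCons(2) pCons_eq_0_iff) 
    moreover have "lead_coeff a dvd 1" using lc by (metis dvdI)
    ultimately show ?thesis by (metis is_unit_const_poly_iff)
  next
    case False
    then have "degree b = 0" using dg by simp
    then have "b = [:lead_coeff b:]" by (metis degree_eq_zeroE lead_coeff_pCons(2) pCons_eq_0_iff) 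
    moreover have "lead_coeff b dvd 1" using lc by (metis dvdI mult.commute)
    ultimately show ?thesis by (metis is_unit_const_poly_iff)
  qed
qed

lemma no_rational_root:
  fixes f :: "'a::field poly"
  assumes ex: "exceptional f" and pc: "pcompose f \<phi> = f"
  shows "\<phi> = [:0,1:]"
proof -
  let ?h = "[:-\<phi>, 1:] :: 'a poly poly"
  have "poly (fX_minus_fY f) \<phi> = 0" by (simp add: eval_fXfY pc)
  then have dv: "?h dvd fX_minus_fY f" by (simp add: poly_eq_0_iff_dvd)
  have "map_poly (map_poly to_ac) ?h = [:- map_poly to_ac \<phi>, 1:]" by simp
  then have "irreducible (map_poly (map_poly to_ac) ?h)" by (simp add: irreducible_monic_lin)
  then obtain c where c: "c \<noteq> 0" "?h = smult [:c:] X_minus_Y" using ex dv unfolding exceptional_def by blast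
  then have "[:-\<phi>, 1:] = [:[:c:] * [:0,1:], [:c:] * [:-1:]:]" by (simp add: X_minus_Y_def)
  then have e1: "-\<phi> = [:c:]*[:0,1:]" and e2: "1 = [:c:]*[:-1:]" by simp_all
  from e2 have "-c = 1" by (simp add: one_pCons)
  then have "c = -1" by (metis minus_minus)
  with e1 have "-\<phi> = [:0,-1:]" by simp
  then have "\<phi> = -[:0,-1:]" by (metis minus_minus)
  then show ?thesis by simp
qed

lemma M_eq_0_iff [simp]: "map_poly to_ac p = 0 \<longleftrightarrow> p = 0"
  by (rule map_poly_eq_0_iff) auto

lemma M_pderiv: "pderiv (map_poly to_ac p) = map_poly to_ac (pderiv p)"
  by (rule poly_eqI) (simp add: coeff_pderiv coeff_map_poly)

lemma pderiv_const_map: "pderiv (map_poly (\<lambda>c. [:c:]) F) = map_poly (\<lambda>c. [:c:]) (pderiv F)"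
  by (rule poly_eqI) (simp add: coeff_pderiv coeff_map_poly of_nat_poly mult.commute)

lemma double_root_pderiv:
  fixes L R :: "'b::idom poly"
  assumes "poly L x = 0"
  shows "poly (pderiv (L * (L * R))) x = 0"
  using assms by (simp add: pderiv_mult)

lemma root_of_lin:
  fixes C :: "'b::field poly poly"
  assumes "degree C = 1" "lead_coeff C = [:\<alpha>:]" "\<alpha> \<noteq> 0"
  shows "\<exists>\<phi>. poly C \<phi> = 0"
proof -
  have C: "C = [:coeff C 0, [:\<alpha>:]:]"
    using assms by (intro poly_eqI) (auto simp: coeff_pCons coeff_eq_0 split: nat.splits)
  have "poly C (smult (-1/\<alpha>) (coeff C 0)) = 0"
    by (subst C) (simp add: assms)
  then show ?thesis by blast
qed

lemma const_lead_unit: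
  fixes A :: "'b::field poly poly"
  assumes "degree A = 0" "lead_coeff A = [:\<alpha>:]" "\<alpha> \<noteq> 0"
  shows "A dvd 1"
proof -
  have "A = [:[:\<alpha>:]:]" using assms by (metis degree_eq_zeroE lead_coeff_pCons(2) pCons_eq_0_iff)
  moreover have "\<alpha> dvd 1" using assms(3) by (metis dvd_field_iff)
  ultimately show ?thesis by (simp add: is_unit_const_poly_iff)
qed

lemma mone: "(-1::'b::comm_ring_1 poly) = [:-1:]"
  by (simp add: one_pCons)

lemma XmY_neg: "(X_minus_Y :: 'b::comm_ring_1 poly poly) = - [:-[:0,1:], 1:]"
  by (simp add: X_minus_Y_def mone)

lemma exists_root:
  fixes f :: "'a::field poly"
  assumes ex: "exceptional f" and sep: "separable_poly f" and deg: "degree f = 3 \<or> degree f = 4"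
  shows "\<exists>\<phi>. pcompose (map_poly to_ac f) \<phi> = map_poly to_ac f \<and> \<phi> \<noteq> [:0,1:]"
proof -
  define n where "n = degree f"
  define F where "F = map_poly to_ac f"
  have n1: "n \<ge> 3" "n \<le> 4" using deg n_def by auto
  have f0: "f \<noteq> 0" using n1 n_def by auto
  have lf: "lead_coeff f \<noteq> 0" using f0 by simp
  have "poly (fX_minus_fY f) [:0,1:] = 0" by (simp add: eval_fXfY)
  then have "[:-[:0,1:], 1:] dvd fX_minus_fY f" by (simp add: poly_eq_0_iff_dvd)
  moreover have "(X_minus_Y :: 'a poly poly) = - [:-[:0,1:], 1:]" by (simp add: X_minus_Y_def mone)
  ultimately have "X_minus_Y dvd fX_minus_fY f" by (metis minus_dvd_iff)
  then obtain G where G: "fX_minus_fY f = X_minus_Y * G" by (elim dvdE)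
  have cfn: "coeff (fX_minus_fY f) n = -[:lead_coeff f:]" using n1 by (simp add: coeff_fXfY n_def)
  have dfx: "degree (fX_minus_fY f) = n"
  proof (rule antisym)
    show "degree (fX_minus_fY f) \<le> n"
      by (rule degree_le) (auto simp: coeff_fXfY coeff_eq_0 n_def)
    show "n \<le> degree (fX_minus_fY f)" by (rule le_degree) (simp add: cfn f0)
  qed
  have XmY0: "X_minus_Y \<noteq> (0::'a poly poly)" by (simp add: X_minus_Y_def)
  have dX: "degree (X_minus_Y::'a poly poly) = 1" by (simp add: X_minus_Y_def)
  have lX: "lead_coeff (X_minus_Y::'a poly poly) = [:-1:]" by (simp add: X_minus_Y_def)
  have G0: "G \<noteq> 0" using G dfx n1 by auto
  have dG: "degree G = n - 1" using G dfx XmY0 G0 dX by (simp add: degree_mult_eq)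
  have "lead_coeff (fX_minus_fY f) = -[:lead_coeff f:]" using dfx cfn by simp
  then have "[:-1:] * lead_coeff G = -[:lead_coeff f:]" using G lX by (simp add: lead_coeff_mult)
  moreover have "[:-1:] = -(1::'a poly)" by (simp add: one_pCons)
  ultimately have "- lead_coeff G = - [:lead_coeff f:]" by simp
  then have lG: "lead_coeff G = [:lead_coeff f:]" by (metis minus_minus)
  have "G dvd fX_minus_fY f" using G by simp
  moreover have "\<not> (\<exists>c. c \<noteq> 0 \<and> G = smult [:c:] X_minus_Y)"
  proof
    assume "\<exists>c. c \<noteq> 0 \<and> G = smult [:c:] X_minus_Y"
    then obtain c where "c \<noteq> 0" "G = smult [:c:] X_minus_Y" by blast
    then have "degree G = 1" using dX by simp
    then show False using dG n1 by simp
  qed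
  ultimately have nirr: "\<not> irreducible (map_poly (map_poly to_ac) G)" using ex unfolding exceptional_def by blast
  define G' where "G' = map_poly (map_poly to_ac) G"
  have dG': "degree G' = n - 1" unfolding G'_def using lG lf dG by (subst degree_map_poly) auto
  have lG': "lead_coeff G' = [:to_ac (lead_coeff f):]" unfolding G'_def using dG' dG lG by (simp add: coeff_map_poly G'_def)
  have G'0: "G' \<noteq> 0" using dG' n1 by auto
  have G'u: "\<not> G' dvd 1" using dG' n1 by (auto simp: is_unit_poly_iff)
  obtain A B where AB: "G' = A * B" "\<not> A dvd 1" "\<not> B dvd 1"
    using nirr G'0 G'u unfolding G'_def[symmetric] irreducible_def by blast
  have A0: "A \<noteq> 0" and B0: "B \<noteq> 0" using AB G'0 by auto
  have "lead_coeff A * lead_coeff B = [:to_ac (lead_coeff f):]" using AB lG' by (simp add: lead_coeff_mult)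
  then have "degree (lead_coeff A) + degree (lead_coeff B) = 0" using A0 B0
    by (metis degree_mult_eq degree_pCons_0 leading_coeff_0_iff)
  then obtain \<alpha> \<beta> where al: "lead_coeff A = [:\<alpha>:]" "\<alpha> \<noteq> 0" and be: "lead_coeff B = [:\<beta>:]" "\<beta> \<noteq> 0"
    using A0 B0 by (metis add_is_0 degree_eq_zeroE leading_coeff_0_iff pCons_eq_0_iff)
  have "degree A \<noteq> 0" using const_lead_unit[OF _ al] AB by blast
  moreover have "degree B \<noteq> 0" using const_lead_unit[OF _ be] AB by blast
  moreover have "degree A + degree B = n - 1" using AB A0 B0 dG' by (simp add: degree_mult_eq)
  ultimately have "degree A = 1 \<or> degree B = 1" using n1 by linarith
  then obtain \<phi> where r: "poly A \<phi> = 0 \<or> poly B \<phi> = 0"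
    using root_of_lin[OF _ al] root_of_lin[OF _ be] by blast
  then have rG: "poly G' \<phi> = 0" using AB by auto
  have MF: "map_poly (map_poly to_ac) (fX_minus_fY f) = X_minus_Y * G'"
    unfolding G G'_def by (simp add: MM_mult map_XmY)
  have "poly (fX_minus_fY F) \<phi> = 0" using MF rG by (simp add: map_fXfY F_def)
  then have pc: "pcompose F \<phi> = F" by (simp add: eval_fXfY)
  have "\<phi> \<noteq> [:0,1:]"
  proof
    assume p: "\<phi> = [:0,1:]"
    then have "[:-[:0,1:], 1:] dvd G'" using rG by (simp add: poly_eq_0_iff_dvd)
    then obtain R where R: "G' = [:-[:0,1:], 1:] * R" by (elim dvdE)
    have "fX_minus_fY F = X_minus_Y * G'" using MF by (simp add: map_fXfY F_def)
    also have "\<dots> = - [:-[:0,1:], 1:] * ([:-[:0,1:], 1:] * R)" by (simp only: XmY_neg R)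
    also have "\<dots> = - ([:-[:0,1:], 1:] * ([:-[:0,1:], 1:] * R))" by (simp only: minus_mult_left)
    finally have "fX_minus_fY F = - ([:-[:0,1:], 1:] * ([:-[:0,1:], 1:] * R))" .
    then have "pderiv (fX_minus_fY F) = - pderiv ([:-[:0,1:], 1:] * ([:-[:0,1:], 1:] * R))" by (simp only: pderiv_minus)
    then have "poly (pderiv (fX_minus_fY F)) [:0,1:] = - poly (pderiv ([:-[:0,1:], 1:] * ([:-[:0,1:], 1:] * R))) [:0,1:]"
      by (simp only: poly_minus)
    moreover have "poly (pderiv ([:-[:0,1:], 1:] * ([:-[:0,1:], 1:] * R))) [:0,1:] = 0"
      by (rule double_root_pderiv) simp
    ultimately have "poly (pderiv (fX_minus_fY F)) [:0,1:] = 0" by simp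
    then have "pderiv F = 0"
      by (simp add: fX_minus_fY_def pderiv_diff pderiv_minus pderiv_const_map pcompose_altdef[symmetric])
    then show False using sep by (simp add: F_def M_pderiv separable_poly_def)
  qed
  then show ?thesis using pc F_def by blast
qed
lemma q3:
  fixes a b c u v :: "'b::field"
  assumes E1: "c*u + 2*b*u*v + 3*a*u*v^2 = c"
   and E2: "b*u^2 + 3*a*u^2*v = b" and U: "u^3 = 1" and a: "a \<noteq> 0" and t: "(3::'b) \<noteq> 0"
   and N: "u \<noteq> 1 \<or> v \<noteq> 0"
  shows "b^2 = 3*a*c"
proof -
  have u1: "u \<noteq> 1"
  proof
    assume "u = 1" then have "3*a*v = 0" using E2 by simp
    then show False using a t N \<open>u = 1\<close> by simp
  qed
  have "(u - 1) * (u^2+u+1) = 0" using U by (simp add: algebra_simps power3_eq_cube power2_eq_square)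
  then have U2: "u^2 + u + 1 = 0" using u1 by simp
  have V: "3*a*v = b*(u-1)"
  proof -
    have "u * (b*u^2 + 3*a*u^2*v) = u*b" using E2 by simp
    then have "b*u^3 + 3*a*u^3*v = u*b" by (simp add: algebra_simps power3_eq_cube power2_eq_square)
    then show ?thesis using U by (simp add: algebra_simps)
  qed
  have "3*a*(c*u + 2*b*u*v + 3*a*u*v^2) = 3*a*c" using E1 by simp
  then have "3*a*c*(u-1) + 2*b*u*(3*a*v) + u*(3*a*v)^2 = 0" by (simp add: algebra_simps power2_eq_square)
  then have "3*a*c*(u-1) + 2*b*u*(b*(u-1)) + u*(b*(u-1))^2 = 0" unfolding V .
  then have "(u-1) * (3*a*c + 2*b^2*u + u*b^2*(u-1)) = 0" by (simp add: algebra_simps power2_eq_square)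
  then have "3*a*c + 2*b^2*u + u*b^2*(u-1) = 0" using u1 by simp
  then have "3*a*c + b^2*(u^2+u+1) - b^2 = 0" by (simp add: algebra_simps power2_eq_square)
  then show ?thesis using U2 by simp
qed

lemma q4:
  fixes a b c d u v :: "'b::field"
  assumes E1: "d*u + 2*c*u*v + 3*b*u*v^2 + 4*a*u*v^3 = d"
   and E2: "c*u^2 + 3*b*u^2*v + 6*a*u^2*v^2 = c" and E3: "b*u^3 + 4*a*u^3*v = b"
   and U: "u^4 = 1" and a: "a \<noteq> 0" and t: "(2::'b) \<noteq> 0"
   and N: "u \<noteq> 1 \<or> v \<noteq> 0"
  shows "b^3 - 4*a*b*c + 8*a^2*d = 0"
proof -
  have u1: "u \<noteq> 1"
  proof
    have f: "(4::'b) \<noteq> 0" using t by (metis mult_eq_0_iff numeral_Bit0 one_add_one mult_2)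
    assume "u = 1" then have "4*a*v = 0" using E3 by simp
    then show False using a f N \<open>u = 1\<close> by simp
  qed
  have "(u - 1) * ((u + 1) * (u^2 + 1)) = 0" using U by (simp add: algebra_simps power3_eq_cube power2_eq_square power4_eq_xxxx)
  then have "u + 1 = 0 \<or> u^2 + 1 = 0" using u1 by simp
  then show ?thesis
  proof
    assume "u + 1 = 0" then have u: "u = -1" by (simp add: add_eq_0_iff2)
    have "2*(b + 2*a*v) = 0" using E3 unfolding u by (simp add: algebra_simps)
    then have "b + 2*a*v = 0" using t by (metis mult_eq_0_iff)
    then have b: "b = -2*a*v" by (simp add: add_eq_0_iff2)
    have "2*(d + c*v) + 3*b*v^2 + 4*a*v^3 = 0" using E1 unfolding u by (simp add: algebra_simps)
    then have "2*(d + c*v - a*v^3) = 0" unfolding b by (simp add: algebra_simps power2_eq_square power3_eq_cube)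
    then have "d + c*v - a*v^3 = 0" using t by (metis mult_eq_0_iff)
    then have d: "d = a*v^3 - c*v" by (simp add: algebra_simps)
    show ?thesis unfolding b d by (simp add: algebra_simps power2_eq_square power3_eq_cube)
  next
    assume "u^2 + 1 = 0" then have u2: "u^2 = -1" by (simp add: add_eq_0_iff2)
    have u3: "u^3 = -u" using u2 by (simp add: power3_eq_cube power2_eq_square)
    define w where "w = u - 1"
    have w0: "w \<noteq> 0" using u1 w_def by simp
    have w2: "w^2 = -2*w - 2" using u2 unfolding w_def by (simp add: algebra_simps power2_eq_square)
    have "u*(b*u^3 + 4*a*u^3*v) = u*b" using E3 by simp
    then have "-b * u^2 - 4*a*v*u^2 = u*b" by (simp add: u3 algebra_simps power2_eq_square)
    then have V: "4*a*v = b*w" unfolding u2 w_def by (simp add: algebra_simps)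
    have "-c - 3*b*v - 6*a*v^2 = c" using E2 unfolding u2 by (simp add: algebra_simps)
    then have "8*a*(2*c + 3*b*v + 6*a*v^2) = 0" by (simp add: algebra_simps)
    then have "16*a*c + 6*b*(4*a*v) + 3*(4*a*v)^2 = 0" by (simp add: algebra_simps power2_eq_square)
    then have "16*a*c + 6*b*(b*w) + 3*(b*w)^2 = 0" unfolding V .
    then have "16*a*c + 6*b^2*w + 3*b^2*w^2 = 0" by (simp add: algebra_simps power2_eq_square)
    then have "16*a*c + 6*b^2*w + 3*b^2*(-2*w - 2) = 0" unfolding w2 .
    then have "2*(8*a*c - 3*b^2) = 0" by (simp add: algebra_simps)
    then have "8*a*c - 3*b^2 = 0" using t by (metis mult_eq_0_iff)
    then have C: "8*a*c = 3*b^2" by simp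
    have "16*a^2*(d*u + 2*c*u*v + 3*b*u*v^2 + 4*a*u*v^3) = 16*a^2*d" using E1 by simp
    then have "16*a^2*d*w + u*((8*a*c)*(4*a*v) + 3*b*(4*a*v)^2 + (4*a*v)^3) = 0"
      unfolding w_def by (simp add: algebra_simps power2_eq_square power3_eq_cube)
    then have "16*a^2*d*w + u*((3*b^2)*(b*w) + 3*b*(b*w)^2 + (b*w)^3) = 0" unfolding V C .
    then have "16*a^2*d*w + u*b^3*w*(3 + 3*w + w^2) = 0" by (simp add: algebra_simps power2_eq_square power3_eq_cube)
    then have "16*a^2*d*w + u*b^3*w*(3 + 3*w + (-2*w - 2)) = 0" unfolding w2 .
    then have "w * (16*a^2*d + u^2*b^3) = 0" unfolding w_def by (simp add: algebra_simps power2_eq_square)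
    then have "16*a^2*d + u^2*b^3 = 0" using w0 by simp
    then have D: "16*a^2*d = b^3" unfolding u2 by (simp add: algebra_simps)
    have "2*(b^3 - 4*a*b*c + 8*a^2*d) = 2*b^3 - b*(8*a*c) + 16*a^2*d" by (simp add: algebra_simps power2_eq_square)
    also have "\<dots> = 0" unfolding C D by (simp add: algebra_simps power2_eq_square power3_eq_cube)
    finally show ?thesis using t by (metis mult_eq_0_iff)
  qed
qed
lemma pc4_iff:
  fixes a b c d e u v :: "'b::field"
  shows "pcompose [:e,d,c,b,a:] [:v,u:] = [:e,d,c,b,a:] \<longleftrightarrow>
    (d*v + c*v^2 + b*v^3 + a*v^4 = 0 \<and> d*u + 2*c*u*v + 3*b*u*v^2 + 4*a*u*v^3 = d \<and>
     c*u^2 + 3*b*u^2*v + 6*a*u^2*v^2 = c \<and> b*u^3 + 4*a*u^3*v = b \<and> (a = 0 \<or> u^4 = 1))"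
  by (simp add: pcompose_pCons algebra_simps power2_eq_square power3_eq_cube power4_eq_xxxx)
lemma pc3_iff:
  fixes a b c d u v :: "'b::field"
  shows "pcompose [:d,c,b,a:] [:v,u:] = [:d,c,b,a:] \<longleftrightarrow>
    (c*v + b*v^2 + a*v^3 = 0 \<and> c*u + 2*b*u*v + 3*a*u*v^2 = c \<and>
     b*u^2 + 3*a*u^2*v = b \<and> (a = 0 \<or> u^3 = 1))"
  by (simp add: pcompose_pCons algebra_simps power2_eq_square power3_eq_cube)
lemma poly4: "degree (f::'b::zero poly) \<le> 4 \<Longrightarrow> f = [:coeff f 0, coeff f 1, coeff f 2, coeff f 3, coeff f 4:]"
  by (rule poly_eqI) (auto simp: coeff_pCons coeff_eq_0 eval_nat_numeral split: nat.split)
lemma pc_deg: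
  fixes F \<phi> :: "'b::field poly"
  assumes "pcompose F \<phi> = F" "degree F \<ge> 1"
  shows "\<phi> = [:coeff \<phi> 0, coeff \<phi> 1:] \<and> coeff \<phi> 1 \<noteq> 0"
proof -
  have "degree F * degree \<phi> = degree F" using assms(1) by (metis degree_pcompose)
  then have d: "degree \<phi> = 1" using assms(2) by simp
  then have "\<phi> = [:coeff \<phi> 0, coeff \<phi> 1:]"
    by (intro poly_eqI) (auto simp: coeff_pCons coeff_eq_0 eval_nat_numeral split: nat.split)
  moreover have "coeff \<phi> 1 \<noteq> 0" using d by (metis leading_coeff_0_iff one_neq_zero degree_0)
  ultimately show ?thesis by blast
qed
lemma even_card:
  assumes "(2::'b::{ring_1,finite}) = 0"
  shows "even (card (UNIV::'b set))"
proof -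
  have "(\<Sum>x\<in>UNIV. x + 1) = (\<Sum>x\<in>UNIV. (x::'b))"
    by (rule sum.reindex_bij_witness[of _ "\<lambda>x. x - 1" "\<lambda>x. x + 1"]) auto
  moreover have "(\<Sum>x\<in>UNIV. x + 1) = (\<Sum>x\<in>UNIV. (x::'b)) + of_nat (card (UNIV::'b set))"
    by (simp add: sum.distrib)
  ultimately have z: "of_nat (card (UNIV::'b set)) = (0::'b)" by simp
  show ?thesis
  proof (rule ccontr)
    assume "odd (card (UNIV::'b set))"
    then obtain k where k: "card (UNIV::'b set) = 2*k+1" by (metis oddE)
    have "(of_nat (2*k+1)::'b) = 2 * of_nat k + 1" by simp
    then have "(1::'b) = 0" using z k assms by simp
    then show False by simp
  qed
qed

lemma pc2_iff:
  fixes a b c u v :: "'b::field"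
  shows "pcompose [:c,b,a:] [:v,u:] = [:c,b,a:] \<longleftrightarrow>
    (b*v + a*v^2 = 0 \<and> b*u + 2*a*u*v = b \<and> (a = 0 \<or> u^2 = 1))"
  by (simp add: pcompose_pCons algebra_simps power2_eq_square)

lemma pderiv4: "pderiv [:a0,a1,a2,a3,a4:] = [:a1, 2*a2, 3*a3, 4*a4::'b::idom:]"
  by (simp add: pderiv_pCons algebra_simps)
lemma pderiv3: "pderiv [:a0,a1,a2,a3:] = [:a1, 2*a2, 3*a3::'b::idom:]"
  by (simp add: pderiv_pCons algebra_simps)
lemma pderiv2: "pderiv [:a0,a1,a2:] = [:a1, 2*a2::'b::idom:]"
  by (simp add: pderiv_pCons algebra_simps)

lemma part2:
  fixes f :: "'a::field poly"
  assumes sep: "separable_poly f" and ex: "exceptional f"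
  shows "degree f \<noteq> 2"
proof
  assume d: "degree f = 2"
  define a0 where "a0 = coeff f 0"
  define a1 where "a1 = coeff f 1"
  define a2 where "a2 = coeff f 2"
  have f: "f = [:a0, a1, a2:]" using poly4[of f] d by (simp add: a0_def a1_def a2_def coeff_eq_0)
  have a2: "a2 \<noteq> 0" using d a2_def by (metis leading_coeff_0_iff zero_neq_numeral degree_0)
  define w where "w = -a1/a2"
  have hw: "a2*w = -a1" using a2 by (simp add: w_def)
  have "a1*w + a2*w^2 = w*(a1 + a2*w)" by (simp add: algebra_simps power2_eq_square)
  also have "\<dots> = 0" by (simp add: hw)
  finally have e0: "a1*w + a2*w^2 = 0" .
  have "a1*(-1) + 2*a2*(-1)*w = -a1 - 2*(a2*w)" by (simp add: algebra_simps)
  also have "\<dots> = a1" by (simp add: hw)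
  finally have e1: "a1*(-1) + 2*a2*(-1)*w = a1" .
  have "pcompose [:a0, a1, a2:] [:w, -1:] = [:a0, a1, a2:]"
    unfolding pc2_iff using e0 e1 by simp
  then have "[:w, -1:] = [:0,1:]" using no_rational_root[OF ex] f by metis
  then have "a1 = 0" "(-1::'a) = 1" using a2 by (auto simp: w_def)
  then have t: "(2::'a) = 0" by (metis add_eq_0_iff one_add_one)
  then have "pderiv f = 0" unfolding f pderiv2 using \<open>a1 = 0\<close> by simp
  then show False using sep by (simp add: separable_poly_def)
qed
lemma ac_num_eq_0: "(numeral k :: 'a::field alg_closure) = 0 \<longleftrightarrow> (numeral k :: 'a) = 0"
proof -
  have "((numeral k :: 'a alg_closure) = 0) = (to_ac (numeral k :: 'a) = 0)" by (simp only: to_ac_numeral)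
  also have "\<dots> = ((numeral k::'a) = 0)" by (rule to_ac_eq_0_iff)
  finally show ?thesis .
qed

lemma part3:
  fixes f :: "'a::field poly"
  assumes sep: "separable_poly f" and ex: "exceptional f" and d: "degree f = 3"
  shows "\<exists>v. critical_values f \<subseteq> {v}"
proof -
  define a0 where "a0 = coeff f 0"
  define a1 where "a1 = coeff f 1"
  define a2 where "a2 = coeff f 2"
  define a3 where "a3 = coeff f 3"
  have f: "f = [:a0, a1, a2, a3:]" using poly4[of f] d by (simp add: a0_def a1_def a2_def a3_def coeff_eq_0)
  have a3: "a3 \<noteq> 0" using d a3_def by (metis leading_coeff_0_iff zero_neq_numeral degree_0)
  define A0 where "A0 = to_ac a0"
  define A1 where "A1 = to_ac a1"
  define A2 where "A2 = to_ac a2"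
  define A3 where "A3 = to_ac a3"
  have A3: "A3 \<noteq> 0" using a3 by (simp add: A3_def)
  have F: "map_poly to_ac f = [:A0, A1, A2, A3:]" by (simp add: f A0_def A1_def A2_def A3_def)
  have pdf: "pderiv f \<noteq> 0" using sep by (simp add: separable_poly_def)
  have crit: "poly (pderiv (map_poly to_ac f)) x = A1 + 2*A2*x + 3*A3*x^2" for x
    by (simp add: F pderiv3 algebra_simps power2_eq_square)
  have uniq: "x = y" if x: "A1 + 2*A2*x + 3*A3*x^2 = 0" and y: "A1 + 2*A2*y + 3*A3*y^2 = 0" for x y
  proof (cases "(3::'a) = 0")
    case True
    then have t3: "(3::'a alg_closure) = 0" by (simp add: ac_num_eq_0)
    have t2: "(2::'a alg_closure) \<noteq> 0"
    proof
      assume "(2::'a alg_closure) = 0"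
      then have "(3::'a alg_closure) = 1" by (metis add_0 numeral_3_eq_3 one_add_one add.commute Suc_eq_plus1 of_nat_numeral of_nat_Suc)
      then show False using t3 by simp
    qed
    have "A2 \<noteq> 0"
    proof
      assume "A2 = 0"
      then have "A1 = 0" using x t3 by simp
      then have "a1 = 0" "a2 = 0" using \<open>A2 = 0\<close> by (simp_all add: A1_def A2_def)
      then show False using pdf True unfolding f pderiv3 by simp
    qed
    then have "2*A2 \<noteq> 0" using t2 by simp
    moreover have hx: "A1 + 2*A2*x = 0" using x t3 by simp
    moreover have hy: "A1 + 2*A2*y = 0" using y t3 by simp
    ultimately show ?thesis by (metis add_left_cancel mult_left_cancel)
  next
    case n3: False
    show ?thesis
    proof (cases "(2::'a) = 0")
      case True
      then have t2: "(2::'a alg_closure) = 0" by (simp add: ac_num_eq_0)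
      then have t3: "(3::'a alg_closure) = 1" by (metis add_0 numeral_3_eq_3 one_add_one add.commute Suc_eq_plus1 of_nat_numeral of_nat_Suc)
      have hx: "A1 + A3*x^2 = 0" using x t2 t3 by simp
      have hy: "A1 + A3*y^2 = 0" using y t2 t3 by simp
      have "A3 * x^2 = A3 * y^2" using hx hy by (metis add_left_cancel)
      then have xy: "x^2 = y^2" using A3 by simp
      have "(x - y)^2 = x^2 - y^2 - 2*(x*y - y^2)" by (simp add: algebra_simps power2_eq_square)
      also have "\<dots> = 0" using xy t2 by simp
      finally show ?thesis by simp
    next
      case n2: False
      obtain \<phi> where pc: "pcompose (map_poly to_ac f) \<phi> = map_poly to_ac f" and pX: "\<phi> \<noteq> [:0,1:]"
        using exists_root[OF ex sep] d by auto
      have "degree (map_poly to_ac f) \<ge> 1" using F A3 by simp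
      then have phi: "\<phi> = [:coeff \<phi> 0, coeff \<phi> 1:]" using pc_deg[OF pc] by blast
      define u where "u = coeff \<phi> 1"
      define v where "v = coeff \<phi> 0"
      have pc': "pcompose [:A0, A1, A2, A3:] [:v, u:] = [:A0, A1, A2, A3:]"
        using pc phi F u_def v_def by metis
      have N: "u \<noteq> 1 \<or> v \<noteq> 0" using pX phi u_def v_def by auto
      from pc'[unfolded pc3_iff] A3 have E1: "A1*u + 2*A2*u*v + 3*A3*u*v^2 = A1"
        and E2: "A2*u^2 + 3*A3*u^2*v = A2" and U: "u^3 = 1" by auto
      have t3: "(3::'a alg_closure) \<noteq> 0" using n3 by (simp add: ac_num_eq_0)
      have key: "A2^2 = 3*A3*A1" using q3[OF E1 E2 U A3 t3 N] .
      have sq: "(3*A3*z + A2)^2 = 3*A3*(A1 + 2*A2*z + 3*A3*z^2)" for z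
        by (simp add: algebra_simps power2_eq_square key[unfolded power2_eq_square])
      have h1: "3*A3*x + A2 = 0" using sq[of x] x by simp
      have h2: "3*A3*y + A2 = 0" using sq[of y] y by simp
      have "3*A3*x + A2 = 3*A3*y + A2" by (simp only: h1 h2)
      then have "(3*A3)*x = (3*A3)*y" by (rule add_right_imp_eq)
      moreover have nz: "3*A3 \<noteq> 0" using A3 t3 by simp
      ultimately show ?thesis by (simp only: mult_left_cancel[OF nz])
    qed
  qed
  show ?thesis
  proof (cases "\<exists>x. poly (pderiv (map_poly to_ac f)) x = 0")
    case True
    then obtain x0 where x0: "poly (pderiv (map_poly to_ac f)) x0 = 0" by blast
    have cx0: "A1 + 2*A2*x0 + 3*A3*x0^2 = 0" using x0 by (simp only: crit)
    have "critical_values f \<subseteq> {poly (map_poly to_ac f) x0}"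
    proof
      fix z assume "z \<in> critical_values f"
      then obtain c where z: "z = poly (map_poly to_ac f) c" and c: "poly (pderiv (map_poly to_ac f)) c = 0"
        unfolding critical_values_def by blast
      have "A1 + 2*A2*c + 3*A3*c^2 = 0" using c by (simp only: crit)
      then have "c = x0" using cx0 by (rule uniq)
      then show "z \<in> {poly (map_poly to_ac f) x0}" using z by simp
    qed
    then show ?thesis by blast
  next
    case False
    then have "critical_values f = {}" unfolding critical_values_def by blast
    then show ?thesis by blast
  qed
qed
lemma part4:
  fixes f :: "'a::field poly"
  assumes sep: "separable_poly f" and ex: "exceptional f" and d: "degree f = 4"
  shows "(2::'a) = 0 \<and> critical_values f = {}"
proof -
  define a0 where "a0 = coeff f 0"
  define a1 where "a1 = coeff f 1"
  define a2 where "a2 = coeff f 2"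
  define a3 where "a3 = coeff f 3"
  define a4 where "a4 = coeff f 4"
  have f: "f = [:a0, a1, a2, a3, a4:]" using poly4[of f] d by (simp add: a0_def a1_def a2_def a3_def a4_def)
  have a4: "a4 \<noteq> 0" using d a4_def by (metis leading_coeff_0_iff zero_neq_numeral degree_0)
  define A0 where "A0 = to_ac a0"
  define A1 where "A1 = to_ac a1"
  define A2 where "A2 = to_ac a2"
  define A3 where "A3 = to_ac a3"
  define A4 where "A4 = to_ac a4"
  have A4: "A4 \<noteq> 0" using a4 by (simp add: A4_def)
  have F: "map_poly to_ac f = [:A0, A1, A2, A3, A4:]" by (simp add: f A0_def A1_def A2_def A3_def A4_def)
  have pdf: "pderiv f \<noteq> 0" using sep by (simp add: separable_poly_def)
  obtain \<phi> where pc: "pcompose (map_poly to_ac f) \<phi> = map_poly to_ac f" and pX: "\<phi> \<noteq> [:0,1:]"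
    using exists_root[OF ex sep] d by auto
  have "degree (map_poly to_ac f) \<ge> 1" using F A4 by simp
  then have phi: "\<phi> = [:coeff \<phi> 0, coeff \<phi> 1:]" using pc_deg[OF pc] by blast
  define u where "u = coeff \<phi> 1"
  define v where "v = coeff \<phi> 0"
  have pc': "pcompose [:A0, A1, A2, A3, A4:] [:v, u:] = [:A0, A1, A2, A3, A4:]"
    using pc phi F u_def v_def by metis
  have N: "u \<noteq> 1 \<or> v \<noteq> 0" using pX phi u_def v_def by auto
  from pc'[unfolded pc4_iff] A4 have E1: "A1*u + 2*A2*u*v + 3*A3*u*v^2 + 4*A4*u*v^3 = A1"
    and E2: "A2*u^2 + 3*A3*u^2*v + 6*A4*u^2*v^2 = A2" and E3: "A3*u^3 + 4*A4*u^3*v = A3"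
    and U: "u^4 = 1" by auto
  have two: "(2::'a) = 0"
  proof (rule ccontr)
    assume n2: "(2::'a) \<noteq> 0"
    then have t2: "(2::'a alg_closure) \<noteq> 0" by (simp add: ac_num_eq_0)
    have "A3^3 - 4*A4*A3*A2 + 8*A4^2*A1 = 0" using q4[OF E1 E2 E3 U A4 t2 N] .
    then have "to_ac (a3^3 - 4*a4*a3*a2 + 8*a4^2*a1) = 0" by (simp add: A1_def A2_def A3_def A4_def)
    then have T: "a3^3 - 4*a4*a3*a2 + 8*a4^2*a1 = 0" by (simp only: to_ac_eq_0_iff)
    define w where "w = -a3/(2*a4)"
    have hw: "2*a4*w = -a3" using a4 n2 by (simp add: w_def)
    have e3: "a3*(-1)^3 + 4*a4*(-1)^3*w = a3"
    proof -
      have "a3*(-1)^3 + 4*a4*(-1)^3*w = -a3 - 2*(2*a4*w)" by (simp add: algebra_simps)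
      also have "\<dots> = a3" by (simp add: hw)
      finally show ?thesis .
    qed
    have e2: "a2*(-1)^2 + 3*a3*(-1)^2*w + 6*a4*(-1)^2*w^2 = a2"
    proof -
      have "a2*(-1)^2 + 3*a3*(-1)^2*w + 6*a4*(-1)^2*w^2 = a2 + 3*w*(a3 + 2*a4*w)"
        by (simp add: algebra_simps power2_eq_square)
      also have "\<dots> = a2" by (simp add: hw)
      finally show ?thesis .
    qed
    define K where "K = 2*a1 + 2*a2*w + 3*a3*w^2 + 4*a4*w^3"
    have "4*a4^2*K = 8*a4^2*a1 + 4*a4*a2*(2*a4*w) + 3*a3*(2*a4*w)^2 + 2*(2*a4*w)^3"
      by (simp add: K_def algebra_simps power2_eq_square power3_eq_cube)
    also have "\<dots> = a3^3 - 4*a4*a3*a2 + 8*a4^2*a1"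
      unfolding hw by (simp add: algebra_simps power2_eq_square power3_eq_cube)
    finally have "4*a4^2*K = 0" using T by simp
    moreover have "(4::'a) \<noteq> 0" using n2 by (metis mult_eq_0_iff numeral_Bit0 one_add_one mult_2)
    ultimately have K: "K = 0" using a4 by simp
    have e1: "a1*(-1) + 2*a2*(-1)*w + 3*a3*(-1)*w^2 + 4*a4*(-1)*w^3 = a1"
    proof -
      have "a1*(-1) + 2*a2*(-1)*w + 3*a3*(-1)*w^2 + 4*a4*(-1)*w^3 = a1 - K"
        by (simp add: K_def algebra_simps)
      then show ?thesis by (simp add: K)
    qed
    have e0: "a1*w + a2*w^2 + a3*w^3 + a4*w^4 = 0"
    proof -
      have "2*(a1*w + a2*w^2 + a3*w^3 + a4*w^4) = w*K - w^3*(a3 + 2*a4*w)"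
        by (simp add: K_def algebra_simps power2_eq_square power3_eq_cube power4_eq_xxxx)
      also have "\<dots> = 0" by (simp add: K hw)
      finally show ?thesis using n2 by (metis mult_eq_0_iff)
    qed
    have "pcompose [:a0, a1, a2, a3, a4:] [:w, -1:] = [:a0, a1, a2, a3, a4:]"
      unfolding pc4_iff using e0 e1 e2 e3 by simp
    then have "[:w, -1:] = [:0,1:]" using no_rational_root[OF ex] f by metis
    then have "(-1::'a) = 1" by simp
    then have "(2::'a) = 0" by (metis add_eq_0_iff one_add_one)
    then show False using n2 by simp
  qed
  then have t2: "(2::'a alg_closure) = 0" by (simp add: ac_num_eq_0)
  have "(u - 1)^4 = (u^4 + 1) - 2*(2*u^3 - 3*u^2 + 2*u)"
    by (simp add: algebra_simps power2_eq_square power3_eq_cube power4_eq_xxxx)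
  also have "\<dots> = 2 - 2*(2*u^3 - 3*u^2 + 2*u)" using U by simp
  also have "\<dots> = 0" using t2 by simp
  finally have u1: "u = 1" by simp
  then have v0: "v \<noteq> 0" using N by simp
  have "A2 + 3*A3*v + 6*A4*v^2 = A2" using E2 u1 by simp
  then have "3*A3*v + 6*A4*v^2 = 0" by simp
  moreover have "3*A3*v + 6*A4*v^2 = A3*v + 2*(A3*v + 3*A4*v^2)" by (simp add: algebra_simps)
  ultimately have "A3 * v = 0" using t2 by simp
  then have "A3 = 0" using v0 by simp
  then have a3: "a3 = 0" by (simp add: A3_def)
  have "(4::'a) = 2*2" by simp
  then have t4: "(4::'a) = 0" using two by simp
  have pd: "pderiv f = [:a1:]" unfolding f pderiv4 using two t4 a3 by simp
  then have "a1 \<noteq> 0" using pdf by auto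
  then have "A1 \<noteq> 0" by (simp add: A1_def)
  have "poly (pderiv (map_poly to_ac f)) x = A1" for x
    by (simp add: M_pderiv pd A1_def)
  then have "critical_values f = {}" unfolding critical_values_def using \<open>A1 \<noteq> 0\<close> by auto
  then show ?thesis using two by simp
qed

theorem lemma2p30:
  fixes f :: "'a::{field, finite} poly"
  assumes "separable_poly f"
    and "exceptional f"
  shows "degree f \<noteq> 2
    \<and> (degree f = 3 \<longrightarrow> (\<exists>v. critical_values f \<subseteq> {v}))
    \<and> (degree f = 4 \<longrightarrow> even (card (UNIV :: 'a set)) \<and> critical_values f = {})"
  using part2[OF assms] part3[OF assms] part4[OF assms] even_card by blast
end
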